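(* Let $m\ge3$ be an integer and let $\mathbf{C}$ be a binary linear $[2^{2m-2}+2^{m-1}-1,\ 2m-1]$ code whose set of nonzero weights is $\{2^{2m-3},\,2^{2m-3}+2^{m-2},\,2^{2m-3}+2^{m-1}\}$. Then the code $\mathbf{C}'$ obtained from $\mathbf{C}$ by the extension construction is a minimal binary linear $[3\cdot2^{2m-3}-1,\ 2m-1,\ 2^{2m-3}]_2$ code with maximum weight $2^{2m-2}$ which violates the Ashikhmin–Barg condition. Moreover, when $m\ge4$, $\mathbf{C}'$ is self-orthogonal.
   Context: Extension construction for a binary $[N,K]$ code $\mathbf{D}$, $K\ge2$, with minimum nonzero weight $w_{min}$, maximum weight $w_{max}$ and $n'=2w_{min}-w_{max}\ge1$: choose a basis $\mathbf{r}_1,\dots,\mathbf{r}_K$ with $wt(\mathbf{r}_1)=w_{max}$, $wt(\mathbf{r}_2)=w_{min}$; the extended code is generated by $(\mathbf{1},\mathbf{r}_1),(\mathbf{0},\mathbf{r}_2),\dots,(\mathbf{0},\mathbf{r}_K)$ in $\mathbf{F}_2^{n'+N}$, with $\mathbf{1},\mathbf{0}\in\mathbf{F}_2^{n'}$. Self-orthogonal: $\mathbf{C}\subseteq\mathbf{C}^\perp$. Minimal code: nonzero codewords with nested supports are equal. Ashikhmin–Barg condition (binary): $w_{min}/w_{max}>1/2$. *)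

theory Defs
  imports Complex_Main
begin

text \<open>Binary vectors of length n are represented as bool lists of length n
  (True = 1, False = 0); addition is componentwise exclusive or.\<close>

type_synonym bvec = "bool list"

definition vzero :: "nat \<Rightarrow> bvec" where
  "vzero n = replicate n False"

definition vadd :: "bvec \<Rightarrow> bvec \<Rightarrow> bvec" where
  "vadd x y = map2 (\<noteq>) x y"

definition wt :: "bvec \<Rightarrow> nat" where
  "wt x = length (filter id x)"

definition supp :: "bvec \<Rightarrow> nat set" where
  "supp x = {i. i < length x \<and> x ! i}"

definition inner2 :: "bvec \<Rightarrow> bvec \<Rightarrow> bool" where
  "inner2 x y = odd (length (filter id (map2 (\<and>) x y)))"

definition lin_code :: "nat \<Rightarrow> bvec set \<Rightarrow> bool" where
  "lin_code n C \<longleftrightarrow> C \<subseteq> {v. length v = n} \<and> vzero n \<in> C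
     \<and> (\<forall>x\<in>C. \<forall>y\<in>C. vadd x y \<in> C)"

definition comb :: "nat \<Rightarrow> bvec list \<Rightarrow> bool list \<Rightarrow> bvec" where
  "comb n rs cs = foldr vadd (map snd (filter fst (zip cs rs))) (vzero n)"

definition span2 :: "nat \<Rightarrow> bvec list \<Rightarrow> bvec set" where
  "span2 n rs = {comb n rs cs | cs. length cs = length rs}"

definition is_basis :: "nat \<Rightarrow> bvec set \<Rightarrow> bvec list \<Rightarrow> bool" where
  "is_basis n C rs \<longleftrightarrow> (\<forall>r\<in>set rs. length r = n) \<and> span2 n rs = C
     \<and> inj_on (comb n rs) {cs. length cs = length rs}"

definition has_dim :: "nat \<Rightarrow> bvec set \<Rightarrow> nat \<Rightarrow> bool" where
  "has_dim n C k \<longleftrightarrow> lin_code n C \<and> (\<exists>rs. length rs = k \<and> is_basis n C rs)"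

definition wts :: "bvec set \<Rightarrow> nat set" where
  "wts C = {wt c | c. c \<in> C \<and> wt c \<noteq> 0}"

definition wmin :: "bvec set \<Rightarrow> nat" where
  "wmin C = Min (wts C)"

definition wmax :: "bvec set \<Rightarrow> nat" where
  "wmax C = Max (wts C)"

text \<open>Extension construction: basis rs (indices 0,1 play the roles of r_1, r_2),
  n' = 2 wmin - wmax, generators (1,r_1), (0,r_2), ..., (0,r_K).\<close>
definition ext_code :: "nat \<Rightarrow> bvec set \<Rightarrow> bvec list \<Rightarrow> bvec set" where
  "ext_code N D rs =
     (let n' = 2 * wmin D - wmax D in
      span2 (n' + N) ((replicate n' True @ hd rs) # map (\<lambda>r. replicate n' False @ r) (tl rs)))"

definition dual_code :: "nat \<Rightarrow> bvec set \<Rightarrow> bvec set" where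
  "dual_code n C = {v. length v = n \<and> (\<forall>c\<in>C. \<not> inner2 c v)}"

definition self_orthogonal :: "nat \<Rightarrow> bvec set \<Rightarrow> bool" where
  "self_orthogonal n C \<longleftrightarrow> C \<subseteq> dual_code n C"

definition minimal_code :: "bvec set \<Rightarrow> bool" where
  "minimal_code C \<longleftrightarrow> (\<forall>c\<in>C. \<forall>c'\<in>C. wt c \<noteq> 0 \<and> wt c' \<noteq> 0 \<and> supp c \<subseteq> supp c' \<longrightarrow> c = c')"

definition AB_condition :: "bvec set \<Rightarrow> bool" where
  "AB_condition C \<longleftrightarrow> real (wmin C) / real (wmax C) > 1 / 2"

end

theory Submission
  imports Defs
begin

lemma length_vadd[simp]: "length (vadd x y) = min (length x) (length y)"
  by (simp add: vadd_def)

lemma nth_vadd[simp]: "i < length x \<Longrightarrow> i < length y \<Longrightarrow> vadd x y ! i = (x!i \<noteq> y!i)"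
  by (simp add: vadd_def)

lemma length_vzero[simp]: "length (vzero n) = n" by (simp add: vzero_def)
lemma nth_vzero[simp]: "i < n \<Longrightarrow> vzero n ! i = False" by (simp add: vzero_def)

lemma comb_Cons[simp]: "comb n (r#rs) (c#cs) = (if c then vadd r (comb n rs cs) else comb n rs cs)"
  by (simp add: comb_def)
lemma comb_Nil1[simp]: "comb n [] cs = vzero n" by (simp add: comb_def)
lemma comb_Nil2[simp]: "comb n rs [] = vzero n" by (simp add: comb_def)

lemma length_comb[simp]: "\<forall>r\<in>set rs. length r = n \<Longrightarrow> length (comb n rs cs) = n"
proof (induction rs arbitrary: cs)
  case Nil then show ?case by simp
next
  case (Cons r rs) then show ?case by (cases cs) auto
qed

lemma filter_zero: "filter fst (zip (replicate k False) rs) = []"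
proof (induction rs arbitrary: k)
  case Nil then show ?case by simp
next
  case (Cons a rs) then show ?case by (cases k) auto
qed

lemma comb_zero: "comb n rs (replicate k False) = vzero n"
  by (simp add: comb_def filter_zero)

lemma vadd_ac1: "length r = n \<Longrightarrow> length x = n \<Longrightarrow> length y = n \<Longrightarrow> vadd (vadd r x) (vadd r y) = vadd x y"
  by (rule nth_equalityI) auto
lemma vadd_ac2: "length r = n \<Longrightarrow> length x = n \<Longrightarrow> length y = n \<Longrightarrow> vadd r (vadd x y) = vadd (vadd r x) y"
  by (rule nth_equalityI) auto
lemma vadd_ac3: "length r = n \<Longrightarrow> length x = n \<Longrightarrow> length y = n \<Longrightarrow> vadd r (vadd x y) = vadd x (vadd r y)"
  by (rule nth_equalityI) auto

lemma vadd_zero_right[simp]: "length x = n \<Longrightarrow> vadd x (vzero n) = x"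
  by (rule nth_equalityI) auto

lemma comb_add: "\<forall>r\<in>set rs. length r = n \<Longrightarrow> length cs = length rs \<Longrightarrow> length ds = length rs \<Longrightarrow>
   comb n rs (map2 (\<noteq>) cs ds) = vadd (comb n rs cs) (comb n rs ds)"
proof (induction rs arbitrary: cs ds)
  case Nil then show ?case by (simp add: vzero_def vadd_def)
next
  case (Cons r rs)
  then obtain c cs' d ds' where cs: "cs = c # cs'" and ds: "ds = d # ds'"
    by (cases cs; cases ds) auto
  with Cons have IH: "comb n rs (map2 (\<noteq>) cs' ds') = vadd (comb n rs cs') (comb n rs ds')" by simp
  have lr: "length r = n" "\<forall>r\<in>set rs. length r = n" using Cons by auto
  show ?case
  proof -
    have lx: "length (comb n rs cs') = n" and ly: "length (comb n rs ds') = n" using lr by auto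
    show ?thesis
    proof (cases c; cases d)
      assume "c" "d" then show ?thesis using IH vadd_ac1[OF lr(1) lx ly] by (simp add: cs ds)
    next
      assume "c" "\<not> d" then show ?thesis using IH vadd_ac2[OF lr(1) lx ly] by (simp add: cs ds)
    next
      assume "\<not> c" "d" then show ?thesis using IH vadd_ac3[OF lr(1) lx ly] by (simp add: cs ds)
    next
      assume "\<not> c" "\<not> d" then show ?thesis using IH by (simp add: cs ds)
    qed
  qed
qed

lemma wt_zero_iff: "wt x = 0 \<longleftrightarrow> x = vzero (length x)"
  by (induction x) (auto simp: vzero_def wt_def)

lemma wt_append[simp]: "wt (a @ b) = wt a + wt b" by (simp add: wt_def)
lemma wt_rep[simp]: "wt (replicate k c) = (if c then k else 0)" by (simp add: wt_def)

lemma wt_Cons[simp]: "wt (a # x) = (if a then Suc (wt x) else wt x)" by (simp add: wt_def)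
lemma wt_Nil[simp]: "wt [] = 0" by (simp add: wt_def)
lemma vadd_Cons[simp]: "vadd (a # x) (b # y) = (a \<noteq> b) # vadd x y" by (simp add: vadd_def)
lemma vadd_Nil[simp]: "vadd [] [] = []" by (simp add: vadd_def)

lemma wt_vadd_sub: "length x = length y \<Longrightarrow> (\<forall>i<length x. x!i \<longrightarrow> y!i) \<Longrightarrow> wt (vadd x y) + wt x = wt y"
proof (induction x y rule: list_induct2)
  case Nil then show ?case by (simp add: wt_def vadd_def)
next
  case (Cons a x b y)
  have "\<forall>i<length x. x!i \<longrightarrow> y!i" using Cons.prems by force
  with Cons.IH have "wt (vadd x y) + wt x = wt y" by simp
  moreover have "a \<longrightarrow> b" using Cons.prems by force
  ultimately show ?case by (cases a; cases b) simp_all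
qed

lemma wt_vadd_inner: "length x = length y \<Longrightarrow>
   wt (vadd x y) + 2 * length (filter id (map2 (\<and>) x y)) = wt x + wt y"
  by (induction x y rule: list_induct2) auto

lemma vadd_append: "length a = length c \<Longrightarrow> vadd (a@b) (c@d) = vadd a c @ vadd b d"
  by (simp add: vadd_def)

lemma vadd_rep: "vadd (replicate k a) (replicate k b) = replicate k (a\<noteq>b)"
  by (induction k) auto

lemma comb_prefix: "\<forall>r\<in>set rs. length r = N \<Longrightarrow> length cs = length rs \<Longrightarrow>
  comb (k+N) (map (\<lambda>r. replicate k False @ r) rs) cs = replicate k False @ comb N rs cs"
proof (induction rs arbitrary: cs)
  case Nil then show ?case by (simp add: vzero_def replicate_add)
next
  case (Cons r rs)
  then obtain c cs' where cs: "cs = c # cs'" by (cases cs) auto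
  with Cons have IH: "comb (k+N) (map (\<lambda>r. replicate k False @ r) rs) cs' = replicate k False @ comb N rs cs'"
    by simp
  show ?case unfolding cs using IH by (simp add: vadd_append vadd_rep)
qed


lemma dvd4_even: "(4::nat) dvd a \<Longrightarrow> 4 dvd b \<Longrightarrow> 4 dvd c \<Longrightarrow> a + 2*k = b + c \<Longrightarrow> \<not> odd k"
  by presburger

theorem proposition5p3:
  fixes m :: nat and C :: "bvec set" and rs :: "bvec list"
  assumes "m \<ge> 3"
    and "has_dim (2^(2*m-2) + 2^(m-1) - 1) C (2*m-1)"
    and "wts C = {2^(2*m-3), 2^(2*m-3) + 2^(m-2), 2^(2*m-3) + 2^(m-1)}"
    and "length rs = 2*m-1"
    and "is_basis (2^(2*m-2) + 2^(m-1) - 1) C rs"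
    and "wt (rs ! 0) = wmax C" and "wt (rs ! 1) = wmin C"
  shows "let C' = ext_code (2^(2*m-2) + 2^(m-1) - 1) C rs in
           has_dim (3 * 2^(2*m-3) - 1) C' (2*m-1)
         \<and> wmin C' = 2^(2*m-3)
         \<and> wmax C' = 2^(2*m-2)
         \<and> minimal_code C'
         \<and> \<not> AB_condition C'
         \<and> (m \<ge> 4 \<longrightarrow> self_orthogonal (3 * 2^(2*m-3) - 1) C')"
proof -
  define t :: nat where "t = 2^(m-2)"
  have t2: "t \<ge> 2"
  proof -
    have "(2::nat)^1 \<le> 2^(m-2)" by (rule power_increasing) (use assms(1) in auto)
    then show ?thesis by (simp add: t_def)
  qed
  have e1: "(2::nat)^(2*m-3) = 2*t*t"
  proof -
    have "2*m-3 = Suc ((m-2)+(m-2))" using assms(1) by arith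
    then have "(2::nat)^(2*m-3) = 2^(Suc ((m-2)+(m-2)))" by simp
    also have "\<dots> = 2*t*t" by (simp only: power_Suc power_add t_def mult.assoc)
    finally show ?thesis .
  qed
  have e2: "(2::nat)^(m-1) = 2*t"
  proof -
    have "m-1 = Suc (m-2)" using assms(1) by arith
    then have "(2::nat)^(m-1) = 2^(Suc (m-2))" by simp
    also have "\<dots> = 2*t" by (simp only: power_Suc t_def)
    finally show ?thesis .
  qed
  have e3: "(2::nat)^(2*m-2) = 4*t*t"
  proof -
    have "2*m-2 = Suc (Suc ((m-2)+(m-2)))" using assms(1) by arith
    then have "(2::nat)^(2*m-2) = 2^(Suc (Suc ((m-2)+(m-2))))" by simp
    also have "\<dots> = 4*t*t" by (simp only: power_Suc power_add t_def mult.assoc)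
    finally show ?thesis .
  qed
  define N where "N = 4*t*t + 2*t - 1"
  define L where "L = 2*m-1"
  have hN: "2^(2*m-2) + 2^(m-1) - 1 = N" unfolding N_def e2 e3 ..
  have L2: "L \<ge> 2" unfolding L_def using assms(1) by simp
  have lin: "lin_code N C" using assms(2) hN by (simp add: has_dim_def)
  have bas: "is_basis N C rs" using assms(5) hN by simp
  have lrs: "\<forall>r\<in>set rs. length r = N" and spanC: "span2 N rs = C"
    and injC: "inj_on (comb N rs) {cs. length cs = length rs}"
    using bas by (auto simp: is_basis_def)
  have lrsL: "length rs = L" using assms(4) L_def by simp
  have wtsC: "wts C = {2*t*t, 2*t*t + t, 2*t*t + 2*t}" using assms(3) unfolding e1 e2 t_def by simp
  have wminC: "wmin C = 2*t*t" unfolding wmin_def wtsC by (simp add: min_def)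
  have wmaxC: "wmax C = 2*t*t + 2*t" unfolding wmax_def wtsC by (simp add: max_def)
  define n' where "n' = 2*t*t - 2*t"
  have nn: "2 * wmin C - wmax C = n'" unfolding wminC wmaxC n'_def by simp
  have tt: "2*t \<le> 2*t*t" using t2 by simp
  have nt: "n' + 2*t = 2*t*t" using tt unfolding n'_def by simp
  obtain r0 r1 rest where rs: "rs = r0 # r1 # rest"
    using lrsL L2 by (cases rs; cases "tl rs") auto
  define G where "G = (replicate n' True @ hd rs) # map (\<lambda>r. replicate n' False @ r) (tl rs)"
  define C' where "C' = ext_code N C rs"
  have C'G: "C' = span2 (n'+N) G" unfolding C'_def ext_code_def Let_def nn G_def ..
  define f where "f cs = replicate n' (hd cs) @ comb N rs cs" for cs
  have lG: "length G = L" using lrsL rs G_def by simp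
  have combG: "comb (n'+N) G cs = f cs" if "length cs = L" for cs
  proof -
    obtain c cs' where cs: "cs = c # cs'" using \<open>length cs = L\<close> L2 by (cases cs) auto
    have lr': "\<forall>r\<in>set (r1#rest). length r = N" using lrs rs by simp
    have lcs': "length cs' = length (r1#rest)" using that cs lrsL rs by simp
    have P: "comb (n'+N) (map (\<lambda>r. replicate n' False @ r) (r1#rest)) cs' = replicate n' False @ comb N (r1#rest) cs'"
      by (rule comb_prefix[OF lr' lcs'])
    have lr0: "length r0 = N" using lrs rs by simp
    show ?thesis unfolding G_def f_def cs rs using P lr0
      by (cases c) (simp_all add: vadd_append vadd_rep)
  qed
  have C'f: "C' = f ` {cs. length cs = L}"
  proof (rule set_eqI)
    fix u
    show "u \<in> C' \<longleftrightarrow> u \<in> f ` {cs. length cs = L}"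
    proof
      assume "u \<in> C'"
      then obtain cs where "length cs = L" "u = comb (n'+N) G cs" unfolding C'G span2_def lG by auto
      then show "u \<in> f ` {cs. length cs = L}" using combG by auto
    next
      assume "u \<in> f ` {cs. length cs = L}"
      then obtain cs where "length cs = L" "u = f cs" by auto
      then have "u = comb (n'+N) G cs" using combG by simp
      then show "u \<in> C'" unfolding C'G span2_def lG using \<open>length cs = L\<close> by auto
    qed
  qed
  have combC: "comb N rs cs \<in> C" if "length cs = L" for cs
    using spanC that lrsL unfolding span2_def by auto
  have lcomb: "length (comb N rs cs) = N" for cs using lrs by simp
  have zeroI: "cs = replicate L False" if "length cs = L" "comb N rs cs = vzero N" for cs
    using injC that comb_zero[of N rs L] lrsL unfolding inj_on_def by auto
  have injf: "cs = ds" if "length cs = L" "length ds = L" "comb N rs cs = comb N rs ds" for cs ds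
    using injC that lrsL unfolding inj_on_def by auto
  have wtf: "wt (f cs) = (if hd cs then n' else 0) + wt (comb N rs cs)" for cs
    unfolding f_def by simp
  have lenC: "length c = N" if "c \<in> C" for c using lin that by (auto simp: lin_code_def)
  have inwts: "wt c \<in> wts C" if "c \<in> C" "wt c \<noteq> 0" for c
    using that unfolding wts_def by auto
  have wtnz: "wt (comb N rs cs) \<noteq> 0" if "length cs = L" "hd cs" for cs
  proof
    assume "wt (comb N rs cs) = 0"
    then have "comb N rs cs = vzero N" using wt_zero_iff lcomb by metis
    then have "cs = replicate L False" using zeroI that by simp
    then show False using that L2 by (cases L) auto
  qed
  have memC': "\<exists>cs. length cs = L \<and> u = f cs" if "u \<in> C'" for u
    using that C'f by auto
  have fC': "f cs \<in> C'" if "length cs = L" for cs using that C'f by auto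
  have lenf: "length (f cs) = n' + N" for cs unfolding f_def using lcomb by simp
  have wbound: "2*t*t \<le> wt u \<and> wt u \<le> 4*t*t" if uC: "u \<in> C'" and nz: "wt u \<noteq> 0" for u
  proof -
    obtain cs where cs: "length cs = L" "u = f cs" using memC'[OF uC] by blast
    let ?x = "comb N rs cs"
    show ?thesis
    proof (cases "hd cs")
      case True
      then have "wt ?x \<in> wts C" using inwts combC wtnz cs by blast
      then have "2*t*t \<le> wt ?x \<and> wt ?x \<le> 2*t*t + 2*t" unfolding wtsC by auto
      moreover have "wt u = n' + wt ?x" using cs wtf True by simp
      ultimately show ?thesis using nt by linarith
    next
      case False
      then have "wt u = wt ?x" using cs wtf by simp
      then have "wt ?x \<in> wts C" using inwts combC cs nz by metis
      then show ?thesis using \<open>wt u = wt ?x\<close> unfolding wtsC by auto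
    qed
  qed
  define cs1 where "cs1 = False # True # replicate (L-2) False"
  define cs0 where "cs0 = True # replicate (L-1) False"
  have lcs1: "length cs1 = L" unfolding cs1_def using L2 by simp
  have lcs0: "length cs0 = L" unfolding cs0_def using L2 by simp
  have lr0: "length r0 = N" and lr1: "length r1 = N" using lrs rs by auto
  have f1: "f cs1 = replicate n' False @ r1"
    unfolding f_def cs1_def rs using lr1 by (simp add: comb_zero)
  have f0: "f cs0 = replicate n' True @ r0"
    unfolding f_def cs0_def rs using lr0 by (simp add: comb_zero)
  have wr1: "wt r1 = 2*t*t" using assms(7) wminC rs by simp
  have wr0: "wt r0 = 2*t*t + 2*t" using assms(6) wmaxC rs by simp
  have wf1: "wt (f cs1) = 2*t*t" using f1 wr1 by simp
  have wf0: "wt (f cs0) = 4*t*t" using f0 wr0 nt by simp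
  have fin: "finite (wts C')"
    by (rule finite_subset[of _ "{..4*t*t}"]) (auto simp: wts_def dest: wbound)
  have pos: "0 < t" using t2 by simp
  have in1: "2*t*t \<in> wts C'" unfolding wts_def
  proof (intro CollectI exI conjI)
    show "2*t*t = wt (f cs1)" using wf1 by simp
    show "f cs1 \<in> C'" using fC'[OF lcs1] .
    show "wt (f cs1) \<noteq> 0" using wf1 pos by simp
  qed
  have in0: "4*t*t \<in> wts C'" unfolding wts_def
  proof (intro CollectI exI conjI)
    show "4*t*t = wt (f cs0)" using wf0 by simp
    show "f cs0 \<in> C'" using fC'[OF lcs0] .
    show "wt (f cs0) \<noteq> 0" using wf0 pos by simp
  qed
  have wminC': "wmin C' = 2*t*t" unfolding wmin_def
    by (rule Min_eqI[OF fin _ in1]) (auto simp: wts_def dest: wbound)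
  have wmaxC': "wmax C' = 4*t*t" unfolding wmax_def
    by (rule Max_eqI[OF fin _ in0]) (auto simp: wts_def dest: wbound)
  have AB: "\<not> AB_condition C'" unfolding AB_condition_def wminC' wmaxC' using pos by simp
  have hdx: "hd (map2 (\<noteq>) cs ds) = (hd cs \<noteq> hd ds)" if "length cs = L" "length ds = L" for cs ds :: "bool list"
    using that L2 by (cases cs; cases ds) auto
  have fadd: "vadd (f cs) (f ds) = f (map2 (\<noteq>) cs ds)" if "length cs = L" "length ds = L" for cs ds
  proof -
    have "comb N rs (map2 (\<noteq>) cs ds) = vadd (comb N rs cs) (comb N rs ds)"
      using comb_add[OF lrs] that lrsL by simp
    then show ?thesis unfolding f_def using hdx[OF that] by (simp add: vadd_append vadd_rep)
  qed
  have closed: "vadd u v \<in> C'" if uC: "u \<in> C'" and vC: "v \<in> C'" for u v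
  proof -
    obtain cs where cs: "length cs = L" "u = f cs" using memC'[OF uC] by blast
    obtain ds where ds: "length ds = L" "v = f ds" using memC'[OF vC] by blast
    show ?thesis using fadd[OF cs(1) ds(1)] fC'[of "map2 (\<noteq>) cs ds"] cs ds by simp
  qed
  have fzero: "f (replicate L False) = vzero (n'+N)"
    unfolding f_def using L2 by (simp add: comb_zero vzero_def replicate_add)
  have lenC': "length u = n' + N" if "u \<in> C'" for u using memC'[OF that] lenf by auto
  have linC': "lin_code (n'+N) C'"
    unfolding lin_code_def using lenC' closed fzero fC'[of "replicate L False"] by auto
  have lGe: "\<forall>r\<in>set G. length r = n'+N" unfolding G_def rs using lr0 lrs rs by auto
  have injG: "inj_on (comb (n'+N) G) {cs. length cs = length G}"
  proof (rule inj_onI)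
    fix cs ds assume "cs \<in> {cs. length cs = length G}" "ds \<in> {cs. length cs = length G}"
      "comb (n'+N) G cs = comb (n'+N) G ds"
    then have l: "length cs = L" "length ds = L" and "f cs = f ds" using lG combG by auto
    then have "drop n' (f cs) = drop n' (f ds)" by simp
    then have "comb N rs cs = comb N rs ds" unfolding f_def by simp
    then show "cs = ds" using injf l by blast
  qed
  have lenN': "3 * 2^(2*m-3) - 1 = n' + N" unfolding e1 N_def using nt by simp
  have hd: "has_dim (3 * 2^(2*m-3) - 1) C' (2*m-1)"
    unfolding lenN' has_dim_def is_basis_def
    using linC' lG lGe C'G injG L_def by auto
  have minimal: "minimal_code C'"
    unfolding minimal_code_def
  proof (intro ballI impI, elim conjE)
    fix u v assume uC: "u \<in> C'" and vC: "v \<in> C'" and nzu: "wt u \<noteq> 0" and nzv: "wt v \<noteq> 0"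
      and sub: "supp u \<subseteq> supp v"
    obtain cs where cs: "length cs = L" "u = f cs" using memC'[OF uC] by blast
    obtain ds where ds: "length ds = L" "v = f ds" using memC'[OF vC] by blast
    define x where "x = comb N rs cs"
    define y where "y = comb N rs ds"
    show "u = v"
    proof (rule ccontr)
      assume "u \<noteq> v"
      then have xy: "x \<noteq> y" using injf cs ds unfolding x_def y_def by auto
      have lx: "length x = N" and ly: "length y = N" unfolding x_def y_def using lcomb by auto
      have le: "\<forall>i<length x. x!i \<longrightarrow> y!i"
      proof (intro allI impI)
        fix i assume i: "i < length x" and xi: "x ! i"
        have "u ! (n'+i) = x ! i" unfolding cs(2) f_def x_def by (simp add: nth_append)
        then have "n'+i \<in> supp u" using i xi lx lenf cs unfolding supp_def by simp
        then have "n'+i \<in> supp v" using sub by blast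
        then have "v ! (n'+i)" unfolding supp_def by simp
        moreover have "v ! (n'+i) = y ! i" unfolding ds(2) f_def y_def by (simp add: nth_append)
        ultimately show "y ! i" by simp
      qed
      have wsum: "wt (vadd x y) + wt x = wt y" using wt_vadd_sub[OF _ le] lx ly by simp
      have xC: "x \<in> C" and yC: "y \<in> C" using combC cs ds unfolding x_def y_def by auto
      have zC: "vadd x y \<in> C" using lin xC yC unfolding lin_code_def by blast
      have "wt (vadd x y) \<noteq> 0"
      proof
        assume "wt (vadd x y) = 0"
        then have z: "vadd x y = vzero N" using wt_zero_iff[of "vadd x y"] lx ly by simp
        have "x = y"
        proof (rule nth_equalityI)
          show "length x = length y" using lx ly by simp
          fix i assume "i < length x"
          then have "vadd x y ! i = False" using z lx by simp
          then show "x ! i = y ! i" using \<open>i < length x\<close> lx ly by auto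
        qed
        then show False using xy by simp
      qed
      then have wz: "wt (vadd x y) \<in> wts C" using inwts zC by blast
      have "wt x \<noteq> 0"
      proof
        assume "wt x = 0"
        then have "x = vzero N" using wt_zero_iff[of x] lx by simp
        then have "cs = replicate L False" using zeroI cs unfolding x_def by simp
        then have "u = vzero (n'+N)" using cs fzero by simp
        then show False using nzu by (simp add: wt_zero_iff)
      qed
      then have wx: "wt x \<in> wts C" using inwts xC by blast
      have "wt y \<noteq> 0" using wsum \<open>wt x \<noteq> 0\<close> by simp
      then have wy: "wt y \<in> wts C" using inwts yC by blast
      have "2*t*t \<le> wt (vadd x y)" "2*t*t \<le> wt x" "wt y \<le> 2*t*t + 2*t"
        using wz wx wy unfolding wtsC by auto
      moreover have "2*t \<le> t*t" using mult_le_mono1[OF t2] by simp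
      ultimately show False using wsum t2 by linarith
    qed
  qed
  have so: "self_orthogonal (3 * 2^(2*m-3) - 1) C'" if m4: "m \<ge> 4"
  proof -
    have "m-2 = Suc (Suc (m-4))" using m4 by arith
    then have "t = 4 * 2^(m-4)" unfolding t_def by simp
    then have d4: "4 dvd t" by simp
    have dn: "4 dvd n'" unfolding n'_def using d4 by (intro dvd_diff_nat) auto
    have dw: "4 dvd w" if "w \<in> wts C" for w using that d4 unfolding wtsC by auto
    have dC': "4 dvd wt u" if uC: "u \<in> C'" for u
    proof -
      obtain cs where cs: "length cs = L" "u = f cs" using memC'[OF uC] by blast
      have "4 dvd wt (comb N rs cs)"
        using dw inwts combC[OF cs(1)] by (cases "wt (comb N rs cs) = 0") auto
      then show ?thesis using cs wtf dn by simp
    qed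
    show ?thesis unfolding self_orthogonal_def dual_code_def lenN'
    proof (intro subsetI CollectI conjI ballI)
      fix u assume uC: "u \<in> C'"
      show "length u = n' + N" using lenC' uC by simp
      fix c assume cC: "c \<in> C'"
      have "wt (vadd c u) + 2 * length (filter id (map2 (\<and>) c u)) = wt c + wt u"
        using wt_vadd_inner lenC' uC cC by simp
      then show "\<not> inner2 c u" unfolding inner2_def
        by (rule dvd4_even[OF dC'[OF closed[OF cC uC]] dC'[OF cC] dC'[OF uC]])
    qed
  qed
  have wminC'': "wmin C' = 2^(2*m-3)" using wminC' e1 by simp
  have wmaxC'': "wmax C' = 2^(2*m-2)" using wmaxC' e3 by simp
  show ?thesis unfolding hN Let_def C'_def[symmetric]
  proof (intro conjI impI)
    show "has_dim (3 * 2 ^ (2 * m - 3) - 1) C' (2 * m - 1)" by (rule hd)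
    show "wmin C' = 2 ^ (2 * m - 3)" by (rule wminC'')
    show "wmax C' = 2 ^ (2 * m - 2)" by (rule wmaxC'')
    show "minimal_code C'" by (rule minimal)
    show "\<not> AB_condition C'" by (rule AB)
    show "self_orthogonal (3 * 2 ^ (2 * m - 3) - 1) C'" if "4 \<le> m" by (rule so[OF that])
  qed
qed
end
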